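(* Let $n_1,n_2\ge2$ and let $s$ be an integer with $1\le s\le n_2/2$. Then there exists a subset $\Omega\subset\{0,1\}^s_{n_1\times n_2}$ such that, for a numerical constant $C\ge 10^{-5}$, $$\log|\Omega|\ge C\,n_1\,s\,\log\Big(\frac{e\,n_2}{s}\Big),$$ and for any two distinct $A,A'\in\Omega$, $\ d_H(A,A')\ge \dfrac{n_1(s+1)}{16}$.
   Context: $\{0,1\}^s_{n_1\times n_2}$ denotes the set of all matrices $A=(a_{ij})\in\mathbb R^{n_1\times n_2}$ with $a_{ij}\in\{0,1\}$ such that each row of $A$ contains exactly $s$ ones. For $A=(a_{ij}),A'=(a'_{ij})$ in this set, the Hamming distance is $d_H(A,A')=\sum_{i=1}^{n_1}\sum_{j=1}^{n_2}\mathbb I(a_{ij}\ne a'_{ij})$. *)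

theory Defs
  imports Complex_Main
begin

text \<open>An n1 x n2 real matrix is modelled as a function nat => nat => real,
  with entries outside the index range {0..<n1} x {0..<n2} equal to 0.\<close>

definition binmat :: "nat \<Rightarrow> nat \<Rightarrow> nat \<Rightarrow> (nat \<Rightarrow> nat \<Rightarrow> real) set" where
  "binmat n1 n2 s = {A. (\<forall>i j. A i j \<in> {0, 1})
      \<and> (\<forall>i j. (n1 \<le> i \<or> n2 \<le> j) \<longrightarrow> A i j = 0)
      \<and> (\<forall>i<n1. card {j. j < n2 \<and> A i j = 1} = s)}"

definition hamming :: "nat \<Rightarrow> nat \<Rightarrow> (nat \<Rightarrow> nat \<Rightarrow> real) \<Rightarrow> (nat \<Rightarrow> nat \<Rightarrow> real) \<Rightarrow> nat" where
  "hamming n1 n2 A A' = card {(i, j). i < n1 \<and> j < n2 \<and> A i j \<noteq> A' i j}"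

end

theory Submission imports Defs "HOL-Library.FuncSet" begin

definition dw :: "'a set \<Rightarrow> ('a \<Rightarrow> nat) \<Rightarrow> ('a \<Rightarrow> nat) \<Rightarrow> nat" where
  "dw I f g = card {p\<in>I. f p \<noteq> g p}"

lemma dw_sym: "dw I f g = dw I g f"
  unfolding dw_def by metis

lemma ball_bound:
  fixes I :: "'a set" and m :: nat and d y :: real
  assumes fin: "finite I" and y: "0 < y" "y \<le> 1" and c: "c \<in> PiE I (\<lambda>_. {..<m})"
  shows "real (card {g\<in>PiE I (\<lambda>_. {..<m}). real (dw I c g) < d})
     \<le> y powr (-d) * (1 + (real m - 1) * y) ^ card I"
proof -
  let ?W = "PiE I (\<lambda>_. {..<m})"
  let ?B = "{g\<in>?W. real (dw I c g) < d}"
  have finW: "finite ?W" using fin by (simp add: finite_PiE)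
  have prodeq: "(\<Prod>p\<in>I. (if c p = g p then 1 else y)) = y ^ dw I c g" for g
  proof -
    have "(\<Prod>p\<in>I. (if c p = g p then 1 else y)) = (\<Prod>p\<in>I \<inter> -{p. c p = g p}. y)"
      by (simp add: prod.If_cases[OF fin])
    also have "\<dots> = y ^ card (I \<inter> -{p. c p = g p})" by simp
    also have "I \<inter> -{p. c p = g p} = {p\<in>I. c p \<noteq> g p}" by auto
    finally show ?thesis by (simp add: dw_def)
  qed
  have sumv: "(\<Sum>v\<in>{..<m}. (if c p = v then 1 else y)) = 1 + (real m - 1) * y" if "p \<in> I" for p
  proof -
    have cp: "c p < m" using c that by auto
    have "(\<Sum>v\<in>{..<m}. (if c p = v then 1 else y)) = (\<Sum>v\<in>{..<m}. y + (if v = c p then 1 - y else 0))"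
      by (rule sum.cong) auto
    also have "\<dots> = real m * y + (1 - y)" using cp by (simp add: sum.distrib)
    finally show ?thesis by (simp add: algebra_simps)
  qed
  have "real (card ?B) = (\<Sum>g\<in>?B. 1)" by simp
  also have "\<dots> \<le> (\<Sum>g\<in>?B. y powr (-d) * y ^ dw I c g)"
  proof (rule sum_mono)
    fix g assume "g \<in> ?B"
    then have lt: "real (dw I c g) \<le> d" by simp
    have "y powr d \<le> y powr real (dw I c g)" using powr_mono'[OF lt] y by simp
    also have "\<dots> = y ^ dw I c g" using y by (simp add: powr_realpow)
    finally have "y powr d \<le> y ^ dw I c g" .
    then have "y powr (-d) * y powr d \<le> y powr (-d) * y ^ dw I c g"
      by (simp add: mult_left_mono)
    moreover have "y powr (-d) * y powr d = 1" using y by (simp add: powr_add[symmetric])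
    ultimately show "1 \<le> y powr (-d) * y ^ dw I c g" by simp
  qed
  also have "\<dots> \<le> (\<Sum>g\<in>?W. y powr (-d) * y ^ dw I c g)"
    by (rule sum_mono2[OF finW]) (use y in auto)
  also have "\<dots> = y powr (-d) * (\<Sum>g\<in>?W. \<Prod>p\<in>I. (if c p = g p then 1 else y))"
    by (simp add: sum_distrib_left prodeq)
  also have "(\<Sum>g\<in>?W. \<Prod>p\<in>I. (if c p = g p then 1 else y)) = (\<Prod>p\<in>I. \<Sum>v\<in>{..<m}. (if c p = v then 1 else y))"
    by (rule prod_sum_PiE[symmetric]) (use fin in auto)
  also have "\<dots> = (\<Prod>p\<in>I. 1 + (real m - 1) * y)" by (rule prod.cong) (auto simp: sumv)
  finally show ?thesis by simp
qed

lemma gv: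
  fixes I :: "'a set" and m :: nat and d y :: real
  assumes fin: "finite I" and y: "0 < y" "y \<le> 1" and d: "0 < d"
  shows "\<exists>\<Omega>. \<Omega> \<subseteq> PiE I (\<lambda>_. {..<m}) \<and>
     (\<forall>f\<in>\<Omega>. \<forall>g\<in>\<Omega>. f \<noteq> g \<longrightarrow> d \<le> real (dw I f g)) \<and>
     real m ^ card I \<le> real (card \<Omega>) * (y powr (-d) * (1 + (real m - 1) * y) ^ card I)"
proof -
  let ?W = "PiE I (\<lambda>_. {..<m})"
  let ?V = "y powr (-d) * (1 + (real m - 1) * y) ^ card I"
  define Codes where "Codes = {\<Omega>. \<Omega> \<subseteq> ?W \<and> (\<forall>f\<in>\<Omega>. \<forall>g\<in>\<Omega>. f \<noteq> g \<longrightarrow> d \<le> real (dw I f g))}"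
  have finW: "finite ?W" using fin by (simp add: finite_PiE)
  have finC: "finite Codes"
  proof (rule finite_subset[of _ "Pow ?W"])
    show "Codes \<subseteq> Pow ?W" unfolding Codes_def by blast
    show "finite (Pow ?W)" using finW by simp
  qed
  have "{} \<in> Codes" unfolding Codes_def by auto
  then have ne: "card ` Codes \<noteq> {}" by auto
  define k where "k = Max (card ` Codes)"
  have "k \<in> card ` Codes" unfolding k_def using finC ne by (intro Max_in) auto
  then obtain \<Omega> where O: "\<Omega> \<in> Codes" "card \<Omega> = k" by auto
  have maxk: "card \<Omega>' \<le> k" if "\<Omega>' \<in> Codes" for \<Omega>'
    unfolding k_def using finC that by (intro Max_ge) auto
  have OW: "\<Omega> \<subseteq> ?W" and Od: "\<forall>f\<in>\<Omega>. \<forall>g\<in>\<Omega>. f \<noteq> g \<longrightarrow> d \<le> real (dw I f g)"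
    using O unfolding Codes_def by auto
  have finO: "finite \<Omega>" using OW finW finite_subset by blast
  have cover: "\<exists>c\<in>\<Omega>. real (dw I c g) < d" if g: "g \<in> ?W" for g
  proof (rule ccontr)
    assume H: "\<not> ?thesis"
    have "g \<notin> \<Omega>"
    proof
      assume "g \<in> \<Omega>"
      moreover have "dw I g g = 0" by (simp add: dw_def)
      ultimately show False using H d by force
    qed
    have H': "\<forall>c\<in>\<Omega>. d \<le> real (dw I c g)" using H by (simp add: not_less)
    have H'': "\<forall>c\<in>\<Omega>. d \<le> real (dw I g c)" using H' dw_sym by metis
    have "insert g \<Omega> \<subseteq> ?W" using OW g by blast
    moreover have "\<forall>f\<in>insert g \<Omega>. \<forall>h\<in>insert g \<Omega>. f \<noteq> h \<longrightarrow> d \<le> real (dw I f h)"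
      using Od H' H'' by blast
    ultimately have "insert g \<Omega> \<in> Codes" unfolding Codes_def by blast
    then have "card (insert g \<Omega>) \<le> k" by (rule maxk)
    with \<open>g \<notin> \<Omega>\<close> finO O(2) show False by simp
  qed
  have "?W \<subseteq> (\<Union>c\<in>\<Omega>. {g\<in>?W. real (dw I c g) < d})"
  proof
    fix g assume "g \<in> ?W"
    then obtain c where "c \<in> \<Omega>" "real (dw I c g) < d" using cover by blast
    with \<open>g \<in> ?W\<close> show "g \<in> (\<Union>c\<in>\<Omega>. {g\<in>?W. real (dw I c g) < d})" by blast
  qed
  then have "card ?W \<le> card (\<Union>c\<in>\<Omega>. {g\<in>?W. real (dw I c g) < d})"
    by (intro card_mono) (use finO finW in auto)
  also have "\<dots> \<le> (\<Sum>c\<in>\<Omega>. card {g\<in>?W. real (dw I c g) < d})"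
    by (rule card_UN_le[OF finO])
  finally have "real (card ?W) \<le> real (\<Sum>c\<in>\<Omega>. card {g\<in>?W. real (dw I c g) < d})"
    by (simp only: of_nat_le_iff)
  also have "\<dots> = (\<Sum>c\<in>\<Omega>. real (card {g\<in>?W. real (dw I c g) < d}))"
    by (rule of_nat_sum)
  also have "\<dots> \<le> (\<Sum>c\<in>\<Omega>. ?V)"
  proof (rule sum_mono)
    fix c assume "c \<in> \<Omega>"
    then have "c \<in> ?W" using OW by blast
    then show "real (card {g\<in>?W. real (dw I c g) < d}) \<le> ?V" by (rule ball_bound[OF fin y])
  qed
  finally have "real (card ?W) \<le> real (card \<Omega>) * ?V" by simp
  moreover have "card ?W = m ^ card I" using fin by (simp add: card_PiE)
  ultimately show ?thesis using OW Od by (intro exI[of _ \<Omega>]) auto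
qed

definition mat :: "nat \<Rightarrow> nat \<Rightarrow> nat \<Rightarrow> (nat \<times> nat \<Rightarrow> nat) \<Rightarrow> nat \<Rightarrow> nat \<Rightarrow> real" where
  "mat n1 m s f = (\<lambda>i j. if i < n1 \<and> j < s * m \<and> j mod m = f (i, j div m) then 1 else 0)"

lemma dm: "x < (m::nat) \<Longrightarrow> (b * m + x) div m = b \<and> (b * m + x) mod m = x"
  by simp

lemma mat_in:
  assumes m: "1 \<le> m" and sm: "s * m \<le> n2"
    and f: "f \<in> PiE ({..<n1} \<times> {..<s}) (\<lambda>_. {..<m})"
  shows "mat n1 m s f \<in> binmat n1 n2 s"
proof -
  have fr: "f (i, b) < m" if "i < n1" "b < s" for i b using f that by auto
  have row: "{j. j < n2 \<and> mat n1 m s f i j = 1} = (\<lambda>b. b * m + f (i, b)) ` {..<s}" if i: "i < n1" for i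
  proof (rule set_eqI, rule iffI)
    fix j assume "j \<in> {j. j < n2 \<and> mat n1 m s f i j = 1}"
    then have j: "j < s * m" "j mod m = f (i, j div m)" by (auto simp: mat_def split: if_splits)
    have "j div m < s" using j(1) by (rule less_mult_imp_div_less)
    moreover have "j = j div m * m + f (i, j div m)" using j(2) by (metis div_mult_mod_eq)
    ultimately show "j \<in> (\<lambda>b. b * m + f (i, b)) ` {..<s}" by auto
  next
    fix j assume "j \<in> (\<lambda>b. b * m + f (i, b)) ` {..<s}"
    then obtain b where b: "b < s" "j = b * m + f (i, b)" by auto
    have x: "f (i, b) < m" using fr i b by auto
    have "j < (b + 1) * m" using b x by simp
    also have "\<dots> \<le> s * m" using b by (intro mult_right_mono) auto
    finally have "j < s * m" .
    moreover have "j div m = b" "j mod m = f (i, b)" using dm[OF x] b by auto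
    ultimately show "j \<in> {j. j < n2 \<and> mat n1 m s f i j = 1}" using sm i by (auto simp: mat_def)
  qed
  have card_row: "card {j. j < n2 \<and> mat n1 m s f i j = 1} = s" if i: "i < n1" for i
  proof -
    have "inj_on (\<lambda>b. b * m + f (i, b)) {..<s}"
    proof (rule inj_onI)
      fix a b assume "a \<in> {..<s}" "b \<in> {..<s}" "a * m + f (i, a) = b * m + f (i, b)"
      assume as: "a \<in> {..<s}" "b \<in> {..<s}" and e: "a * m + f (i, a) = b * m + f (i, b)"
      have "a = (a * m + f (i, a)) div m" using dm[OF fr[OF i, of a], of a] as by simp
      also have "\<dots> = (b * m + f (i, b)) div m" using e by simp
      also have "\<dots> = b" using dm[OF fr[OF i, of b], of b] as by simp
      finally show "a = b" .
    qed
    then show ?thesis using row[OF i] by (simp add: card_image)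
  qed
  show ?thesis unfolding binmat_def using card_row sm by (auto simp: mat_def)
qed

lemma mat_dist:
  assumes m: "1 \<le> m" and sm: "s * m \<le> n2"
    and f: "f \<in> PiE ({..<n1} \<times> {..<s}) (\<lambda>_. {..<m})"
    and g: "g \<in> PiE ({..<n1} \<times> {..<s}) (\<lambda>_. {..<m})"
  shows "2 * dw ({..<n1} \<times> {..<s}) f g \<le> hamming n1 n2 (mat n1 m s f) (mat n1 m s g)"
proof -
  let ?I = "{..<n1} \<times> {..<s}"
  let ?D = "{p\<in>?I. f p \<noteq> g p}"
  let ?H = "{(i, j). i < n1 \<and> j < n2 \<and> mat n1 m s f i j \<noteq> mat n1 m s g i j}"
  define F where "F = (\<lambda>p::nat\<times>nat. (fst p, snd p * m + f p))"
  define G where "G = (\<lambda>p::nat\<times>nat. (fst p, snd p * m + g p))"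
  have fr: "f p < m" "g p < m" if "p \<in> ?I" for p using f g that by auto
  have finD: "finite ?D" by (rule finite_subset[of _ ?I]) auto
  have key: "fst p = fst q \<and> snd p = snd q \<and> h p = k q"
    if pI: "p \<in> ?I" and qI: "q \<in> ?I" and hk: "h p < m" "k q < m"
       and e: "(fst p, snd p * m + h p) = (fst q, snd q * m + k q)" for p q h k
  proof -
    have e1: "fst p = fst q" and e2: "snd p * m + h p = snd q * m + k q" using e by simp_all
    have a: "(snd p * m + h p) div m = snd p" "(snd p * m + h p) mod m = h p" using dm[OF hk(1)] by auto
    have b: "(snd q * m + k q) div m = snd q" "(snd q * m + k q) mod m = k q" using dm[OF hk(2)] by auto
    show ?thesis using e1 e2 a b by simp
  qed
  have inF: "inj_on F ?D"
  proof (rule inj_onI)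
    fix p q assume p: "p \<in> ?D" and q: "q \<in> ?D" and e: "F p = F q"
    have pI: "p \<in> ?I" and qI: "q \<in> ?I" using p q by auto
    have "fst p = fst q \<and> snd p = snd q \<and> f p = f q"
      by (rule key[of p q f f, OF pI qI fr(1)[OF pI] fr(1)[OF qI]]) (use e in \<open>simp add: F_def\<close>)
    then show "p = q" by (simp add: prod_eq_iff)
  qed
  have inG: "inj_on G ?D"
  proof (rule inj_onI)
    fix p q assume p: "p \<in> ?D" and q: "q \<in> ?D" and e: "G p = G q"
    have pI: "p \<in> ?I" and qI: "q \<in> ?I" using p q by auto
    have "fst p = fst q \<and> snd p = snd q \<and> g p = g q"
      by (rule key[of p q g g, OF pI qI fr(2)[OF pI] fr(2)[OF qI]]) (use e in \<open>simp add: G_def\<close>)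
    then show "p = q" by (simp add: prod_eq_iff)
  qed
  have disj: "F ` ?D \<inter> G ` ?D = {}"
  proof (rule ccontr)
    assume "F ` ?D \<inter> G ` ?D \<noteq> {}"
    then obtain p q where p: "p \<in> ?D" and q: "q \<in> ?D" and e: "F p = G q" by blast
    have pI: "p \<in> ?I" and qI: "q \<in> ?I" using p q by auto
    have "fst p = fst q \<and> snd p = snd q \<and> f p = g q"
      by (rule key[of p q f g, OF pI qI fr(1)[OF pI] fr(2)[OF qI]]) (use e in \<open>simp add: F_def G_def\<close>)
    then have pq: "p = q" and fg: "f p = g q" by (simp_all add: prod_eq_iff)
    then show False using p by simp
  qed
  have sub_aux: "(fst p, snd p * m + h p) \<in> ?H" if p: "p \<in> ?D" and hh: "h = f \<or> h = g" for p h
  proof -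
    obtain i b where pe: "p = (i, b)" by (cases p)
    have i: "i < n1" and b: "b < s" using p pe by auto
    have x: "h p < m" using hh fr p by auto
    have "b * m + h p < (b + 1) * m" using x by simp
    also have "\<dots> \<le> s * m" using b by (intro mult_right_mono) auto
    finally have lt: "b * m + h p < s * m" .
    have dd: "(b * m + h p) div m = b" "(b * m + h p) mod m = h p" using dm[OF x] by auto
    have neq: "f p \<noteq> g p" using p by auto
    show ?thesis using lt sm i dd neq hh pe by (auto simp: mat_def)
  qed
  have "F ` ?D \<union> G ` ?D \<subseteq> ?H" using sub_aux unfolding F_def G_def by blast
  moreover have "finite ?H" by (rule finite_subset[of _ "{..<n1} \<times> {..<n2}"]) auto
  ultimately have "card (F ` ?D \<union> G ` ?D) \<le> card ?H" by (rule card_mono[rotated])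
  moreover have "card (F ` ?D \<union> G ` ?D) = 2 * card ?D"
    using card_Un_disjoint[OF finite_imageI[OF finD] finite_imageI[OF finD] disj]
      card_image[OF inF] card_image[OF inG] by simp
  ultimately show ?thesis unfolding hamming_def dw_def by simp
qed

lemma ln2_half: "1/2 \<le> ln (2::real)"
proof -
  have "ln (1/2::real) \<le> 1/2 - 1" by (rule ln_le_minus_one) simp
  then show ?thesis by (simp add: ln_div)
qed

lemma lnpart:
  fixes m N :: nat and c :: real
  assumes m: "2 \<le> m"
    and h: "real m ^ N \<le> c * ((1 / (4 * real m)) powr (-(real N / 16)) * (1 + (real m - 1) * (1 / (4 * real m))) ^ N)"
  shows "real N * ln (real m) / 4 \<le> ln c"
proof -
  let ?V = "(1 / (4 * real m)) powr (-(real N / 16)) * (1 + (real m - 1) * (1 / (4 * real m))) ^ N"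
  have mpos: "0 < real m" using m by simp
  have q: "0 < 1 + (real m - 1) * (1 / (4 * real m))" using m by (simp add: field_simps)
  have Vpos: "0 < ?V" using mpos q by simp
  have "0 < real m ^ N" using mpos by simp
  then have cpos: "0 < c" using h Vpos by (smt (verit) mult_nonpos_nonneg)
  have "ln (real m ^ N) \<le> ln (c * ?V)" by (rule ln_mono[OF h \<open>0 < real m ^ N\<close>])
  also have "\<dots> = ln c + ln ?V" by (rule ln_mult_pos[OF cpos Vpos])
  finally have A: "real N * ln (real m) \<le> ln c + ln ?V" using mpos by (simp add: ln_realpow)
  have p1: "(1 / (4 * real m)) powr (-(real N / 16)) = (4 * real m) powr (real N / 16)"
    using mpos by (simp add: powr_minus_divide powr_divide)
  have l1: "ln ((4 * real m) powr (real N / 16)) = real N / 16 * (ln 4 + ln (real m))"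
    using mpos by (simp add: ln_powr ln_mult)
  have l2: "ln ((1 + (real m - 1) * (1 / (4 * real m))) ^ N) = real N * ln (1 + (real m - 1) * (1 / (4 * real m)))"
    using q by (simp add: ln_realpow)
  have l3: "ln (1 + (real m - 1) * (1 / (4 * real m))) \<le> 1/4"
  proof -
    have "ln (1 + (real m - 1) * (1 / (4 * real m))) \<le> (real m - 1) * (1 / (4 * real m))"
      using ln_le_minus_one[OF q] by simp
    also have "\<dots> \<le> 1/4" using mpos by (simp add: field_simps)
    finally show ?thesis .
  qed
  have ln4: "ln (4::real) = 2 * ln 2"
  proof -
    have "ln (4::real) = ln (2 ^ 2)" by simp
    also have "\<dots> = 2 * ln 2" by (subst ln_realpow) simp
    finally show ?thesis .
  qed
  have "ln 2 \<le> ln (real m)" by (rule ln_mono) (use m in auto)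
  then have lnm: "1/2 \<le> ln (real m)" using ln2_half by linarith
  have lnV: "ln ?V = real N / 16 * (ln 4 + ln (real m)) + real N * ln (1 + (real m - 1) * (1 / (4 * real m)))"
  proof -
    have "ln ?V = ln ((1 / (4 * real m)) powr (-(real N / 16))) + ln ((1 + (real m - 1) * (1 / (4 * real m))) ^ N)"
      by (rule ln_mult_pos) (use mpos q in auto)
    then show ?thesis unfolding p1 l1 l2 .
  qed
  have N0: "0 \<le> real N" by simp
  have "ln 2 \<le> ln (real m)" by (rule ln_mono) (use m in auto)
  then have l4: "ln 4 + ln (real m) \<le> 3 * ln (real m)" using ln4 by linarith
  have "ln ?V \<le> real N / 16 * (3 * ln (real m)) + real N * (1/4)"
    unfolding lnV using l4 l3 N0 by (intro add_mono mult_left_mono) auto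
  moreover have "real N * (1/2) \<le> real N * ln (real m)" using lnm N0 by (rule mult_left_mono)
  ultimately show ?thesis using A by linarith
qed

theorem lemma1:
  shows "\<exists>C::real. C \<ge> 10 powr (-5) \<and>
    (\<forall>n1 n2 s::nat. 2 \<le> n1 \<and> 2 \<le> n2 \<and> 1 \<le> s \<and> real s \<le> real n2 / 2 \<longrightarrow>
      (\<exists>\<Omega>. \<Omega> \<subseteq> binmat n1 n2 s \<and>
         ln (real (card \<Omega>)) \<ge> C * real n1 * real s * ln (exp 1 * real n2 / real s) \<and>
         (\<forall>A\<in>\<Omega>. \<forall>A'\<in>\<Omega>. A \<noteq> A' \<longrightarrow>
            real (hamming n1 n2 A A') \<ge> real n1 * (real s + 1) / 16)))"
proof (intro exI[of _ "1/16"] conjI allI impI)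
  show "(10::real) powr (-5) \<le> 1/16"
    by (simp add: powr_minus powr_realpow)
next
  fix n1 n2 s :: nat
  assume H: "2 \<le> n1 \<and> 2 \<le> n2 \<and> 1 \<le> s \<and> real s \<le> real n2 / 2"
  then have n1: "2 \<le> n1" and s1: "1 \<le> s" and s2: "2 * s \<le> n2" by auto
  define m where "m = n2 div s"
  have m2: "2 \<le> m"
  proof -
    have "(2 * s) div s \<le> n2 div s" using s2 by (rule div_le_mono)
    moreover have "(2 * s) div s = 2" using s1 by simp
    ultimately show ?thesis unfolding m_def by simp
  qed
  have sm: "s * m \<le> n2" unfolding m_def by simp
  have n2lt: "n2 < s * (m + 1)"
  proof -
    have "n2 = m * s + n2 mod s" unfolding m_def by simp
    moreover have "n2 mod s < s" using s1 by simp
    ultimately show ?thesis by (simp add: algebra_simps)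
  qed
  let ?I = "{..<n1} \<times> {..<s}"
  let ?N = "n1 * s"
  have cI: "card ?I = ?N" by (simp add: card_cartesian_product)
  define d where "d = real ?N / 16"
  define y where "y = 1 / (4 * real m)"
  have dpos: "0 < d" unfolding d_def using n1 s1 by simp
  have ypos: "0 < y" "y \<le> 1" unfolding y_def using m2 by auto
  obtain \<Omega> where OW: "\<Omega> \<subseteq> PiE ?I (\<lambda>_. {..<m})"
    and Od: "\<forall>f\<in>\<Omega>. \<forall>g\<in>\<Omega>. f \<noteq> g \<longrightarrow> d \<le> real (dw ?I f g)"
    and Oc: "real m ^ card ?I \<le> real (card \<Omega>) * (y powr (-d) * (1 + (real m - 1) * y) ^ card ?I)"
    using gv[of ?I y d m] ypos dpos by auto
  have m1: "1 \<le> m" using m2 by simp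
  have dist: "real n1 * real s / 8 \<le> real (hamming n1 n2 (mat n1 m s f) (mat n1 m s g))"
    if f: "f \<in> \<Omega>" and g: "g \<in> \<Omega>" and fg: "f \<noteq> g" for f g
  proof -
    have "d \<le> real (dw ?I f g)" using Od f g fg by blast
    moreover have "2 * dw ?I f g \<le> hamming n1 n2 (mat n1 m s f) (mat n1 m s g)"
      by (rule mat_dist[OF m1 sm]) (use OW f g in auto)
    ultimately show ?thesis unfolding d_def by simp
  qed
  define \<Omega>' where "\<Omega>' = mat n1 m s ` \<Omega>"
  have inj: "inj_on (mat n1 m s) \<Omega>"
  proof (rule inj_onI, rule ccontr)
    fix f g assume f: "f \<in> \<Omega>" and g: "g \<in> \<Omega>" and e: "mat n1 m s f = mat n1 m s g" and fg: "f \<noteq> g"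
    have "real n1 * real s / 8 \<le> real (hamming n1 n2 (mat n1 m s f) (mat n1 m s g))"
      by (rule dist[OF f g fg])
    moreover have "hamming n1 n2 (mat n1 m s f) (mat n1 m s g) = 0" unfolding e hamming_def by simp
    moreover have "0 < real n1 * real s" using n1 s1 by simp
    ultimately show False by simp
  qed
  have cardO: "card \<Omega>' = card \<Omega>" unfolding \<Omega>'_def by (rule card_image[OF inj])
  show "\<exists>\<Omega>. \<Omega> \<subseteq> binmat n1 n2 s \<and>
         ln (real (card \<Omega>)) \<ge> 1/16 * real n1 * real s * ln (exp 1 * real n2 / real s) \<and>
         (\<forall>A\<in>\<Omega>. \<forall>A'\<in>\<Omega>. A \<noteq> A' \<longrightarrow>
            real (hamming n1 n2 A A') \<ge> real n1 * (real s + 1) / 16)"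
  proof (intro exI[of _ \<Omega>'] conjI)
    show "\<Omega>' \<subseteq> binmat n1 n2 s" unfolding \<Omega>'_def
      using mat_in[OF m1 sm] OW by blast
  next
    show "\<forall>A\<in>\<Omega>'. \<forall>A'\<in>\<Omega>'. A \<noteq> A' \<longrightarrow> real (hamming n1 n2 A A') \<ge> real n1 * (real s + 1) / 16"
    proof (intro ballI impI)
      fix A A' assume A: "A \<in> \<Omega>'" and A': "A' \<in> \<Omega>'" and ne: "A \<noteq> A'"
      obtain f g where f: "f \<in> \<Omega>" "A = mat n1 m s f" and g: "g \<in> \<Omega>" "A' = mat n1 m s g"
        using A A' unfolding \<Omega>'_def by blast
      have "f \<noteq> g" using ne f g by blast
      then have "real n1 * real s / 8 \<le> real (hamming n1 n2 A A')" using dist f g by simp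
      moreover have "real n1 * (real s + 1) / 16 \<le> real n1 * real s / 8"
        using s1 by (simp add: field_simps mult_left_mono)
      ultimately show "real n1 * (real s + 1) / 16 \<le> real (hamming n1 n2 A A')" by linarith
    qed
  next
    have L: "real ?N * ln (real m) / 4 \<le> ln (real (card \<Omega>))"
      by (rule lnpart[OF m2]) (use Oc in \<open>simp add: cI d_def y_def\<close>)
    have spos: "0 < real s" using s1 by simp
    have q: "real n2 / real s \<le> 2 * real m"
    proof -
      have "real n2 < real s * (real m + 1)" 
      proof -
        have "real n2 < real (s * (m + 1))" using n2lt by (simp only: of_nat_less_iff)
        then show ?thesis by (simp add: algebra_simps)
      qed
      then have "real n2 / real s < real m + 1" using spos by (simp add: field_simps)
      then show ?thesis using m1 by simp
    qed
    have n2s: "0 < real n2 / real s" using s1 s2 by simp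
    have e1: "ln (exp 1 * real n2 / real s) = 1 + ln (real n2 / real s)"
      using n2s by (simp add: ln_mult_pos times_divide_eq_right[symmetric] del: times_divide_eq_right)
    have "ln (real n2 / real s) \<le> ln (2 * real m)" by (rule ln_mono[OF q n2s])
    also have "\<dots> = ln 2 + ln (real m)" using m2 by (simp add: ln_mult_pos)
    finally have a: "ln (real n2 / real s) \<le> ln 2 + ln (real m)" .
    have "ln 2 \<le> ln (real m)" by (rule ln_mono) (use m2 in auto)
    then have b: "ln (exp 1 * real n2 / real s) \<le> 4 * ln (real m)"
      using e1 a ln2_half by linarith
    have "1/16 * real n1 * real s * ln (exp 1 * real n2 / real s) \<le> 1/16 * real n1 * real s * (4 * ln (real m))"
      using b by (intro mult_left_mono) auto
    also have "\<dots> = real ?N * ln (real m) / 4" by simp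
    finally show "1/16 * real n1 * real s * ln (exp 1 * real n2 / real s) \<le> ln (real (card \<Omega>'))"
      using L unfolding cardO by linarith
  qed
qed

end
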